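(* Let $n\ge 1$ and let $H$ be a subgroup of the cyclic group $\mathbb{Z}_n=\{0,1,\dots,n-1\}$. Let $a$ be the smallest positive integer whose residue modulo $n$ lies in $H$ (so $a\mid n$, $H=\langle a\rangle$, and $a=n$ if $H=\{0\}$), and let $o(a)=n/a$ be the order of $a$ in $\mathbb{Z}_n$. Then $\Gamma_{\mathbb{Z}_n,H}$ admits a perfect code if and only if one of the following holds: (1) $n$ is odd; (2) $n$ is even and $o(a)$ is odd; (3) $n$ is even and $o(a)=2$; (4) $n$ is even, $o(a)\ge 4$ is even, and $a$ is odd.
   Context: For a subgroup $H$ of a finite abelian group $A$ (written additively with identity $0$), the subgroup sum graph $\Gamma_{A,H}$ is the simple undirected graph with vertex set $A$ in which distinct vertices $x,y$ are adjacent if and only if $x+y\in H\setminus\{0\}$. A perfect code in a graph is a set $C$ of vertices that is independent and such that every vertex not in $C$ is adjacent to exactly one vertex of $C$. *)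

theory Defs
  imports Main
begin

text \<open>The cyclic group Z_n is modelled as the carrier {0..<n} of natural numbers with
addition modulo n.\<close>

definition Zn_subgroup :: "nat \<Rightarrow> nat set \<Rightarrow> bool" where
  "Zn_subgroup n H \<longleftrightarrow> H \<subseteq> {0..<n} \<and> 0 \<in> H \<and>
     (\<forall>x\<in>H. \<forall>y\<in>H. (x + y) mod n \<in> H) \<and> (\<forall>x\<in>H. (n - x) mod n \<in> H)"

definition sg_sum_adj :: "nat \<Rightarrow> nat set \<Rightarrow> nat \<Rightarrow> nat \<Rightarrow> bool" where
  "sg_sum_adj n H x y \<longleftrightarrow> x \<noteq> y \<and> (x + y) mod n \<in> H - {0}"

definition perfect_code :: "'a set \<Rightarrow> ('a \<Rightarrow> 'a \<Rightarrow> bool) \<Rightarrow> 'a set \<Rightarrow> bool" where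
  "perfect_code V adj C \<longleftrightarrow> C \<subseteq> V \<and> (\<forall>x\<in>C. \<forall>y\<in>C. \<not> adj x y) \<and>
     (\<forall>v\<in>V - C. \<exists>!c. c \<in> C \<and> adj v c)"

end

theory Submission
  imports Defs
begin


lemma struct_H:
  fixes n :: nat and H :: "nat set"
  assumes n: "n \<ge> 1" and sg: "Zn_subgroup n H"
  defines "a \<equiv> (LEAST k::nat. 0 < k \<and> k mod n \<in> H)"
  shows "0 < a \<and> a dvd n \<and> H = {x. x < n \<and> a dvd x}"
proof -
  have Hsub: "H \<subseteq> {0..<n}" and H0: "0 \<in> H"
    and Hadd: "\<And>x y. x\<in>H \<Longrightarrow> y\<in>H \<Longrightarrow> (x + y) mod n \<in> H"
    and Hneg: "\<And>x. x\<in>H \<Longrightarrow> (n - x) mod n \<in> H"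
    using sg unfolding Zn_subgroup_def by auto
  have Pn: "0 < n \<and> n mod n \<in> H" using n H0 by auto
  have Pa: "0 < a \<and> a mod n \<in> H" unfolding a_def by (rule LeastI[of _ n], rule Pn)
  have least: "\<And>k. 0 < k \<Longrightarrow> k mod n \<in> H \<Longrightarrow> a \<le> k" unfolding a_def
    by (rule Least_le) simp
  have mult: "(k*a) mod n \<in> H" for k
  proof (induction k)
    case 0 then show ?case using H0 by simp
  next
    case (Suc k)
    have "((k*a) mod n + a mod n) mod n \<in> H" using Hadd[OF Suc Pa[THEN conjunct2]] .
    then show ?case by (simp add: mod_add_eq add.commute)
  qed
  have inH_dvd: "a dvd x" if x: "x \<in> H" for x
  proof (rule ccontr)
    assume nd: "\<not> a dvd x"
    define q where "q = x div a"
    define r where "r = x mod a"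
    have xlt: "x < n" using x Hsub by auto
    have xeq: "x = q*a + r" unfolding q_def r_def by simp
    have rpos: "0 < r" using nd unfolding r_def by (simp add: dvd_eq_mod_eq_0)
    have rlt: "r < a" unfolding r_def using Pa by simp
    have qa: "(q*a) mod n = q*a" using xeq xlt by simp
    have "(x + (n - q*a) mod n) mod n \<in> H" using Hadd[OF x Hneg[OF mult[of q, unfolded qa]]] .
    moreover have "(x + (n - q*a) mod n) mod n = r"
    proof (cases "q*a = 0")
      case True
      have "(n - q*a) mod n = 0" by (simp add: True)
      moreover have "x = r" using True xeq by simp
      ultimately show ?thesis using xlt by simp
    next
      case False
      then have "(n - q*a) mod n = n - q*a" using xlt xeq by simp
      then have "(x + (n - q*a) mod n) mod n = (n + r) mod n" using xeq xlt by simp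
      also have "\<dots> = r" using xeq xlt by simp
      finally show ?thesis .
    qed
    ultimately have "r mod n \<in> H" using xeq xlt by simp
    from least[OF rpos this] rlt show False by simp
  qed
  have advd: "a dvd n"
  proof (rule ccontr)
    assume nd: "\<not> a dvd n"
    define q where "q = n div a"
    define r where "r = n mod a"
    have xeq: "n = q*a + r" unfolding q_def r_def by simp
    have rpos: "0 < r" using nd unfolding r_def by (simp add: dvd_eq_mod_eq_0)
    have rlt: "r < a" unfolding r_def using Pa by simp
    have qa: "(q*a) mod n = q*a" using xeq rpos by simp
    have "a \<le> n" using least Pn by blast
    then have rn: "r < n" using rlt by simp
    have "(n - q*a) mod n \<in> H" using Hneg[OF mult[of q, unfolded qa]] .
    moreover have "(n - q*a) mod n = r" using xeq rn by simp
    ultimately have "r mod n \<in> H" using rn by simp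
    from least[OF rpos this] rlt show False by simp
  qed
  have "H = {x. x < n \<and> a dvd x}"
  proof
    show "H \<subseteq> {x. x < n \<and> a dvd x}" using Hsub inH_dvd by auto
    show "{x. x < n \<and> a dvd x} \<subseteq> H"
    proof
      fix x assume "x \<in> {x. x < n \<and> a dvd x}"
      then have xn: "x < n" and "a dvd x" by auto
      then obtain k where "x = a*k" by (auto elim: dvdE)
      then have "x = k*a" "x < n" using xn by (auto simp: mult.commute)
      then show "x \<in> H" using mult[of k] by simp
    qed
  qed
  then show ?thesis using Pa advd by simp
qed



lemma adj_iff:
  assumes "a dvd n" "H = {x. x<n \<and> a dvd x}" "0 < n"
  shows "sg_sum_adj n H x y \<longleftrightarrow> x\<noteq>y \<and> a dvd x+y \<and> \<not> n dvd x+y"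
proof -
  have 1: "(x+y) mod n < n" using assms(3) by simp
  have 2: "a dvd (x+y) mod n \<longleftrightarrow> a dvd x+y" using dvd_mod_iff[OF assms(1)] .
  have 3: "(x+y) mod n \<noteq> 0 \<longleftrightarrow> \<not> n dvd x+y" by (simp add: dvd_eq_mod_eq_0)
  show ?thesis unfolding sg_sum_adj_def assms(2) using 1 2 3 by blast
qed

lemma dvd_between:
  fixes n s :: nat
  assumes "n dvd s" "0 < s" "s < 2*n" shows "s = n"
proof -
  obtain j where sj: "s = n*j" using assms(1) by blast
  have "0 < j" using assms(2) sj by (cases j) auto
  moreover have "j < 2" using assms(3) sj by simp
  ultimately have "j = 1" by simp
  then show ?thesis using sj by simp
qed

lemma no_pc:
  fixes a m n :: nat
  assumes nam: "n = a*m" and apos: "0<a" and ea: "even a" and em: "even m" and m4: "4 \<le> m"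
    and pc: "perfect_code {0..<n} (\<lambda>x y. x\<noteq>y \<and> a dvd x+y \<and> \<not> n dvd x+y) C"
  shows False
proof -
  obtain h where ah: "a = 2*h" using ea by blast
  obtain k where mk: "m = 2*k" using em by blast
  have hpos: "0 < h" using apos ah by simp
  have pc': "C \<subseteq> {0..<n} \<and> (\<forall>x\<in>C. \<forall>y\<in>C. \<not>(x\<noteq>y \<and> a dvd x+y \<and> \<not> n dvd x+y)) \<and>
     (\<forall>v\<in>{0..<n} - C. \<exists>!c. c\<in>C \<and> (v\<noteq>c \<and> a dvd v+c \<and> \<not> n dvd v+c))"
    using pc unfolding perfect_code_def by simp
  have Csub: "C \<subseteq> {0..<n}" using pc' by simp
  have ind: "\<And>x y. x\<in>C \<Longrightarrow> y\<in>C \<Longrightarrow> \<not>(x\<noteq>y \<and> a dvd x+y \<and> \<not> n dvd x+y)"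
    using pc' by simp
  have dom: "\<And>v. v\<in>{0..<n} - C \<Longrightarrow> \<exists>!c. c\<in>C \<and> (v\<noteq>c \<and> a dvd v+c \<and> \<not> n dvd v+c)"
    using pc' by simp
  define K where "K = {x. x < n \<and> x mod a = h}"
  have KK: "a dvd x + y" if "x \<in> K" "y \<in> K" for x y
  proof -
    have "x mod a = h" "y mod a = h" using that K_def by simp_all
    then obtain p q where "x = a*p + h" "y = a*q + h" using mult_div_mod_eq[of a x] mult_div_mod_eq[of a y] by metis
    then have "x + y = a*(p + q + 1)" using ah by (simp add: algebra_simps)
    then show ?thesis by simp
  qed
  have Kclosed: "y \<in> K" if "x \<in> K" "y < n" "a dvd x + y" for x y
  proof -
    have "x mod a = h" using that(1) K_def by simp
    then obtain q where xe: "x = a*q + h" using mult_div_mod_eq[of a x] by metis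
    have "a dvd a*q + (h + y)" using that(3) xe by (simp add: add.assoc)
    then have "a dvd h + y" using dvd_add_right_iff dvd_triv_left by blast
    then have d: "a dvd h + y mod a" by (simp add: dvd_eq_mod_eq_0 mod_add_right_eq)
    have "y mod a < a" using apos by simp
    then have lt: "h + y mod a < 2*a" using ah by simp
    have "h + y mod a = a" by (rule dvd_between[OF d _ lt]) (use hpos in simp)
    then show ?thesis using that(2) ah unfolding K_def by simp
  qed
  have Knot: "\<not> n dvd x + x" if "x \<in> K" for x
  proof
    assume d: "n dvd x + x"
    have "x mod a = h" using that K_def by simp
    then obtain q where xe: "x = a*q + h" using mult_div_mod_eq[of a x] by metis
    have "x + x = 2*h*(2*q + 1)" using xe ah by (simp add: algebra_simps)
    moreover have "n = 2*h*(2*k)" using nam ah mk by simp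
    ultimately have e: "2*h*(2*k) dvd 2*h*(2*q + 1)" using d by simp
    have "2*h \<noteq> 0" using hpos by simp
    then have "2*k dvd 2*q + 1" using e by (subst (asm) nat_mult_dvd_cancel_disj) simp
    moreover have "2 dvd 2*k" by simp
    ultimately have "2 dvd 2*q + 1" by (rule dvd_trans[rotated])
    then show False by simp
  qed
  have Kneg: "n - x \<in> K" "n - x \<noteq> x" "0 < x" if "x \<in> K" for x
  proof -
    have xn: "x < n" using that unfolding K_def by simp
    have "x mod a = h" using that unfolding K_def by simp
    then show "0 < x" using hpos by (cases "x = 0") auto
    then have "n - x < n" using xn by simp
    moreover have "a dvd x + (n - x)" using xn nam by simp
    ultimately show "n - x \<in> K" using Kclosed[OF that] by blast
    show "n - x \<noteq> x"
    proof
      assume "n - x = x"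
      then have "x + x = n" using xn by simp
      then show False using Knot[OF that] by simp
    qed
  qed
  have hK: "h \<in> K" "h + a \<in> K" "h + 2*a \<in> K"
  proof -
    have "4*a \<le> n" using nam m4 by simp
    then show "h \<in> K" "h + a \<in> K" "h + 2*a \<in> K" unfolding K_def using ah hpos by auto
  qed
  obtain c where cC: "c \<in> C" and cK: "c \<in> K"
  proof (cases "h \<in> C")
    case True then show ?thesis using that hK by blast
  next
    case False
    then have "h \<in> {0..<n} - C" using hK unfolding K_def by auto
    then obtain c where "c \<in> C" "a dvd h + c" using dom by blast
    moreover have "c < n" using Csub \<open>c \<in> C\<close> by auto
    ultimately show ?thesis using that Kclosed[OF hK(1)] by blast
  qed
  define c' where "c' = n - c"
  have c'K: "c' \<in> K" and c'ne: "c' \<noteq> c" using Kneg[OF cK] unfolding c'_def by auto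
  have cc': "c + c' = n" using cK unfolding c'_def K_def by simp
  obtain w where wK: "w \<in> K" and wc: "w \<noteq> c" and wc': "w \<noteq> c'"
  proof -
    have "\<exists>w\<in>{h, h+a, h+2*a}. w \<noteq> c \<and> w \<noteq> c'" using apos by auto
    then show ?thesis using that hK by blast
  qed
  have adjK: "\<not> n dvd x + y" if "x \<in> K" "y \<in> K" "x + y \<noteq> n" for x y
  proof
    assume "n dvd x + y"
    moreover have "x + y < 2*n" "0 < x + y" using that Kneg(3)[OF that(1)] unfolding K_def by auto
    ultimately have "x + y = n" using dvd_between by blast
    then show False using that by simp
  qed
  have cn: "c < n" "w < n" using cK wK unfolding K_def by auto
  have wcn: "w + c \<noteq> n" using wc' cn unfolding c'_def by auto
  have wc'n: "w + c' \<noteq> n" using wc cn unfolding c'_def by auto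
  have adj1: "w \<noteq> c \<and> a dvd w + c \<and> \<not> n dvd w + c"
    using wc KK[OF wK cK] adjK[OF wK cK wcn] by blast
  have wnC: "w \<notin> C"
  proof
    assume "w \<in> C"
    from ind[OF this cC] adj1 show False by blast
  qed
  then have wV: "w \<in> {0..<n} - C" using cn by simp
  show False
  proof (cases "c' \<in> C")
    case True
    have adj2: "w \<noteq> c' \<and> a dvd w + c' \<and> \<not> n dvd w + c'"
      using wc' KK[OF wK c'K] adjK[OF wK c'K wc'n] by blast
    from dom[OF wV] have "\<And>x y. x \<in> C \<and> (w \<noteq> x \<and> a dvd w + x \<and> \<not> n dvd w + x) \<Longrightarrow>
        y \<in> C \<and> (w \<noteq> y \<and> a dvd w + y \<and> \<not> n dvd w + y) \<Longrightarrow> x = y"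
      by (metis (no_types, lifting))
    from this[OF conjI[OF cC adj1] conjI[OF True adj2]] c'ne show False by simp
  next
    case False
    have c'n: "c' < n" using c'K unfolding K_def by simp
    then have "c' \<in> {0..<n} - C" using False by simp
    from dom[OF this] obtain d where dC: "d \<in> C" and dadj: "c' \<noteq> d" "a dvd c' + d" "\<not> n dvd c' + d"
      by blast
    have dn: "d < n" using dC Csub by auto
    have dK: "d \<in> K" using Kclosed[OF c'K dn dadj(2)] .
    have dc: "d \<noteq> c" using dadj(3) cc' by (auto simp: add.commute)
    have "n dvd c + d" using ind[OF cC dC] dc KK[OF cK dK] by blast
    moreover have "c + d \<noteq> n" using dadj(1) cn unfolding c'_def by auto
    ultimately show False using adjK[OF cK dK] by blast
  qed
qed



lemma res_neg:
  fixes a v x :: nat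
  assumes "0 < a" "a dvd v + x"
  shows "x mod a = (a - v mod a) mod a"
proof -
  define r where "r = v mod a"
  define s where "s = x mod a"
  have rl: "r < a" "s < a" unfolding r_def s_def using assms(1) by simp_all
  have "(v + x) mod a = 0" using assms(2) by simp
  then have "(r + s) mod a = 0" unfolding r_def s_def by (simp add: mod_add_eq)
  then have d: "a dvd r + s" by (simp add: dvd_eq_mod_eq_0)
  show ?thesis
  proof (cases "r + s = 0")
    case True then show ?thesis unfolding r_def[symmetric] s_def[symmetric] by simp
  next
    case False
    then have "r + s = a" using dvd_between[OF d] rl by simp
    then show ?thesis unfolding r_def[symmetric] s_def[symmetric] using rl by simp
  qed
qed

lemma res_eq:
  fixes a v x y :: nat
  assumes "0 < a" "a dvd v + x" "a dvd v + y"
  shows "x mod a = y mod a"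
  using res_neg[OF assms(1,2)] res_neg[OF assms(1,3)] by simp

lemma res_large:
  fixes a m n t :: nat
  assumes "n = a*m" "0 < m" "0 < t" "t \<le> a"
  shows "(n - t) mod a = a - t"
proof -
  obtain k where "m = Suc k" using assms(2) by (cases m) auto
  then have "n - t = a*k + (a - t)" using assms by (simp add: algebra_simps)
  moreover have "a - t < a" using assms by simp
  ultimately show ?thesis by simp
qed

lemma not_ndvd:
  fixes n s :: nat
  assumes "0 < s" "s < 2*n" "s \<noteq> n" shows "\<not> n dvd s"
  using dvd_between assms by blast

lemma small_res:
  fixes a c :: nat
  assumes "0 < a" "2*c \<le> a" shows "c mod a = c"
  using assms by simp



lemma C1_indep:
  fixes a m n c1 c2 :: nat
  assumes nam: "n = a*m" and apos: "0<a" and mpos: "0<m"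
  and c1: "c1 < n" "2*c1 \<le> a \<or> 2*(n-c1) \<le> a"
  and c2: "c2 < n" "2*c2 \<le> a \<or> 2*(n-c2) \<le> a"
  and ne: "c1 \<noteq> c2" and d: "a dvd c1 + c2"
  shows "n dvd c1 + c2"
proof -
  have r2: "c2 mod a = (a - c1 mod a) mod a" using res_neg[OF apos d] .
  have r1: "c1 mod a = (a - c2 mod a) mod a" using res_neg[OF apos] d by (simp add: add.commute)
  have lg: "x mod a = a - (n - x)" if "x < n" "\<not> 2*x \<le> a" "2*(n-x) \<le> a" for x
  proof -
    have "(n - (n - x)) mod a = a - (n - x)" by (rule res_large[OF nam mpos]) (use that in auto)
    then show ?thesis using that by simp
  qed
  show ?thesis
  proof (cases "2*c1 \<le> a")
    case s1: True
    have e1: "c1 mod a = c1" using s1 apos by simp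
    show ?thesis
    proof (cases "2*c2 \<le> a")
      case s2: True
      have e2: "c2 mod a = c2" using s2 apos by simp
      have "c2 = (a - c1) mod a" using r2 e1 e2 by simp
      then have False using s1 s2 ne apos
        by (cases "c1 = 0") auto
      then show ?thesis ..
    next
      case l2: False
      then have l2': "2*(n-c2) \<le> a" using c2 by simp
      have e2: "c2 mod a = a - (n - c2)" using lg[OF c2(1) l2 l2'] .
      have "a - (n - c2) = (a - c1) mod a" using r2 e1 e2 by simp
      moreover have "0 < a - (n - c2)" using l2' apos by simp
      ultimately have nz: "c1 \<noteq> 0" by (cases "c1 = 0") auto
      then have "(a - c1) mod a = a - c1" using apos by simp
      then have "a - (n - c2) = a - c1" using \<open>a - (n - c2) = (a - c1) mod a\<close> by simp
      then have "c1 + c2 = n" using l2' s1 c2 by simp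
      then show ?thesis by simp
    qed
  next
    case l1: False
    then have l1': "2*(n-c1) \<le> a" using c1 by simp
    have e1: "c1 mod a = a - (n - c1)" using lg[OF c1(1) l1 l1'] .
    show ?thesis
    proof (cases "2*c2 \<le> a")
      case s2: True
      have e2: "c2 mod a = c2" using s2 apos by simp
      have "a - (n - c1) = (a - c2) mod a" using r1 e1 e2 by simp
      moreover have "0 < a - (n - c1)" using l1' apos by simp
      ultimately have nz: "c2 \<noteq> 0" by (cases "c2 = 0") auto
      then have "(a - c2) mod a = a - c2" using apos by simp
      then have "a - (n - c1) = a - c2" using \<open>a - (n - c1) = (a - c2) mod a\<close> by simp
      then have "c1 + c2 = n" using l1' s2 c1 by simp
      then show ?thesis by simp
    next
      case l2: False
      then have l2': "2*(n-c2) \<le> a" using c2 by simp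
      have e2: "c2 mod a = a - (n - c2)" using lg[OF c2(1) l2 l2'] .
      have "a - (n - c2) = (a - (a - (n - c1))) mod a" using r2 e1 e2 by simp
      also have "\<dots> = n - c1" using l1' c1 apos by simp
      finally have "False" using l1' l2' c1 c2 ne by simp
      then show ?thesis ..
    qed
  qed
qed



lemma dom_small_r:
  fixes a n v :: nat
  assumes "a dvd n" "0 < a" "v < n" "0 < v mod a" "v \<noteq> v mod a"
  shows "a dvd v + (n - v mod a) \<and> \<not> n dvd v + (n - v mod a)"
proof -
  obtain q where vq: "v = a*q + v mod a" using mult_div_mod_eq[of a v] by metis
  have rv: "v mod a \<le> v" by simp
  have s: "v + (n - v mod a) = a*q + n" using vq rv assms(3) by linarith
  have "a dvd a*q + n" using assms(1) by simp
  moreover have "\<not> n dvd a*q + n"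
    by (rule not_ndvd) (use assms s rv in linarith)+
  ultimately show ?thesis using s by simp
qed

lemma dom_big_r:
  fixes a n v :: nat
  assumes "a dvd n" "0 < a" "v < n" "v + (a - v mod a) \<noteq> n" "0 < n"
  shows "a dvd v + (a - v mod a) \<and> \<not> n dvd v + (a - v mod a)"
proof -
  obtain q where vq: "v = a*q + v mod a" using mult_div_mod_eq[of a v] by metis
  have rl: "v mod a < a" using assms(2) by simp
  have s: "v + (a - v mod a) = a*(q+1)" using vq rl by (simp add: algebra_simps)
  have an: "a \<le> n" using assms(1) assms(5) by (simp add: dvd_imp_le)
  have "\<not> n dvd v + (a - v mod a)"
    by (rule not_ndvd) (use assms an rl in linarith)+
  then show ?thesis using s by simp
qed

lemma C1_dom:
  fixes a m n v :: nat
  assumes nam: "n = a*m" and apos: "0<a" and mpos: "0<m"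
  and v: "v < n" "\<not> (2*v \<le> a \<or> 2*(n-v) \<le> a)"
  shows "\<exists>c. c < n \<and> (2*c \<le> a \<or> 2*(n-c) \<le> a) \<and> a dvd v + c \<and> \<not> n dvd v + c"
proof -
  have adn: "a dvd n" using nam by simp
  have np: "0 < n" using v by simp
  define r where "r = v mod a"
  have rl: "r < a" unfolding r_def using apos by simp
  have rv: "r \<le> v" unfolding r_def by simp
  consider "r = 0" | "0 < r" "2*r \<le> a" | "a < 2*r" by linarith
  then show ?thesis
  proof cases
    case 1
    then have "a dvd v" unfolding r_def by (simp add: dvd_eq_mod_eq_0)
    moreover have "\<not> n dvd v" using v by (auto dest: dvd_imp_le)
    ultimately show ?thesis using np by (intro exI[of _ 0]) simp
  next
    case 2
    have "v \<noteq> r" using 2 v by auto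
    then have "a dvd v + (n - r) \<and> \<not> n dvd v + (n - r)"
      using dom_small_r[OF adn apos v(1)] 2 unfolding r_def by simp
    moreover have "n - r < n" "2*(n - (n - r)) \<le> a" using 2 rv v by auto
    ultimately show ?thesis by blast
  next
    case 3
    have "v + (a - r) \<noteq> n" using 3 v rv rl by auto
    then have "a dvd v + (a - r) \<and> \<not> n dvd v + (a - r)"
      using dom_big_r[OF adn apos v(1) _ np] unfolding r_def by simp
    moreover have "a - r < n" "2*(a - r) \<le> a" using 3 rv v rl by auto
    ultimately show ?thesis by blast
  qed
qed



lemma large_res:
  fixes a m n x :: nat
  assumes nam: "n = a*m" and mpos: "0<m" and "x < n" "2*(n-x) \<le> a"
  shows "x mod a = a - (n - x)"
proof -
  have "(n - (n - x)) mod a = a - (n - x)" by (rule res_large[OF nam mpos]) (use assms in auto)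
  then show ?thesis using assms by simp
qed

lemma C1_mixed:
  fixes a m n v c c' :: nat
  assumes nam: "n = a*m" and apos: "0<a" and mpos: "0<m" and cond: "odd a \<or> m = 2"
  and v: "v < n" "\<not> (2*v \<le> a \<or> 2*(n-v) \<le> a)"
  and c: "2*c \<le> a" and c': "c' < n" "2*(n-c') \<le> a" "\<not> 2*c' \<le> a"
  and e: "c mod a = c' mod a" and dv: "a dvd v + c"
  shows False
proof -
  have e1: "c mod a = c" using c apos by simp
  have e2: "c' mod a = a - (n - c')" by (rule large_res[OF nam mpos c'(1,2)])
  have cc: "c = a - (n - c')" using e e1 e2 by simp
  then have ac: "a = 2*c" using c c' by linarith
  then have m2: "m = 2" using cond by simp
  have cpos: "0 < c" using ac apos by simp
  have vr: "v mod a = c"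
  proof -
    have dv': "a dvd c + v" using dv by (simp add: add.commute)
    have "v mod a = (a - c mod a) mod a" by (rule res_neg[OF apos dv'])
    also have "\<dots> = c" using e1 ac cpos by simp
    finally show ?thesis .
  qed
  obtain q where vq: "v = a*q + c" using mult_div_mod_eq[of a v] vr by metis
  have "q < 2" using vq v(1) nam m2 cpos
    by (metis add_lessD1 mult_less_cancel1)
  then have "q = 0 \<or> q = 1" by auto
  then show False
  proof
    assume "q = 0" then have "v = c" using vq by simp
    then show False using v c by simp
  next
    assume "q = 1" then have "n - v = c" using vq nam m2 ac by simp
    then show False using v c by simp
  qed
qed

lemma C1_uniq:
  fixes a m n v c1 c2 :: nat
  assumes nam: "n = a*m" and apos: "0<a" and mpos: "0<m" and cond: "odd a \<or> m = 2"
  and v: "v < n" "\<not> (2*v \<le> a \<or> 2*(n-v) \<le> a)"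
  and c1: "c1 < n" "2*c1 \<le> a \<or> 2*(n-c1) \<le> a"
  and c2: "c2 < n" "2*c2 \<le> a \<or> 2*(n-c2) \<le> a"
  and d1: "a dvd v + c1" and d2: "a dvd v + c2"
  shows "c1 = c2"
proof -
  have e: "c1 mod a = c2 mod a" using res_eq[OF apos d1 d2] .
  show ?thesis
  proof (cases "2*c1 \<le> a")
    case s1: True
    show ?thesis
    proof (cases "2*c2 \<le> a")
      case True
      then show ?thesis using e s1 apos by simp
    next
      case False
      then show ?thesis using C1_mixed[OF nam apos mpos cond v s1 c2(1) _ False e d1] c2 by auto
    qed
  next
    case l1: False
    then have l1': "2*(n-c1) \<le> a" using c1 by simp
    show ?thesis
    proof (cases "2*c2 \<le> a")
      case True
      then show ?thesis using C1_mixed[OF nam apos mpos cond v True c1(1) l1' l1 e[symmetric] d2] by auto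
    next
      case False
      then have "2*(n-c2) \<le> a" using c2 by simp
      then have "a - (n - c1) = a - (n - c2)"
        using e large_res[OF nam mpos c1(1) l1'] large_res[OF nam mpos c2(1)] by simp
      then show ?thesis using l1' \<open>2*(n-c2) \<le> a\<close> c1 c2 by linarith
    qed
  qed
qed



lemma hm_res:
  fixes h m :: nat
  assumes "0 < h" "odd m"
  shows "(h*m) mod (2*h) = h"
proof -
  obtain k where "m = 2*k + 1" using assms(2) oddE by blast
  then have "h*m = (2*h)*k + h" by (simp add: algebra_simps)
  then show ?thesis using assms(1) by simp
qed

lemma strict_res:
  fixes a m n c :: nat
  assumes nam: "n = a*m" and mpos: "0<m" and apos: "0 < a"
  and c: "c < n" "2*c < a \<or> 2*(n-c) < a"
  shows "(2*(c mod a) < a \<and> c mod a = c) \<or> (2*(c mod a) > a \<and> c mod a = a - (n - c))"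
proof (cases "2*c < a")
  case True then show ?thesis using apos by simp
next
  case False
  then have l: "2*(n-c) < a" using c by simp
  have "c mod a = a - (n - c)" by (rule large_res[OF nam mpos c(1)]) (use l in simp)
  then show ?thesis using l c by auto
qed

lemma C2_uniq:
  fixes a m n h c1 c2 :: nat
  assumes nam: "n = a*m" and apos: "0<a" and mpos: "0<m" and ah: "a = 2*h" and om: "odd m"
  and c1: "c1 < n" "2*c1 < a \<or> 2*(n-c1) < a \<or> c1 = h*m"
  and c2: "c2 < n" "2*c2 < a \<or> 2*(n-c2) < a \<or> c2 = h*m"
  and e: "c1 mod a = c2 mod a"
  shows "c1 = c2"
proof -
  have hpos: "0 < h" using ah apos by simp
  have hr: "(h*m) mod a = h" using hm_res[OF hpos om] ah by simp
  show ?thesis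
  proof (cases "c1 = h*m")
    case True
    show ?thesis
    proof (rule ccontr)
      assume "c1 \<noteq> c2"
      then have "2*c2 < a \<or> 2*(n-c2) < a" using c2 True by auto
      from strict_res[OF nam mpos apos c2(1) this] show False using e True hr ah by auto
    qed
  next
    case F1: False
    then have s1: "2*c1 < a \<or> 2*(n-c1) < a" using c1 by auto
    show ?thesis
    proof (cases "c2 = h*m")
      case True
      from strict_res[OF nam mpos apos c1(1) s1] show ?thesis using e True hr ah by auto
    next
      case False
      then have s2: "2*c2 < a \<or> 2*(n-c2) < a" using c2 by auto
      from strict_res[OF nam mpos apos c1(1) s1] strict_res[OF nam mpos apos c2(1) s2]
      show ?thesis using e c1(1) c2(1) by auto
    qed
  qed
qed

lemma C2_indep:
  fixes a m n h c1 c2 :: nat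
  assumes nam: "n = a*m" and apos: "0<a" and mpos: "0<m" and ah: "a = 2*h" and om: "odd m"
  and c1: "c1 < n" "2*c1 < a \<or> 2*(n-c1) < a \<or> c1 = h*m"
  and c2: "c2 < n" "2*c2 < a \<or> 2*(n-c2) < a \<or> c2 = h*m"
  and ne: "c1 \<noteq> c2" and d: "a dvd c1 + c2"
  shows "n dvd c1 + c2"
proof -
  have hpos: "0 < h" using ah apos by simp
  have hr: "(h*m) mod a = h" using hm_res[OF hpos om] ah by simp
  have r2: "c2 mod a = (a - c1 mod a) mod a" using res_neg[OF apos d] .
  have r1: "c1 mod a = (a - c2 mod a) mod a" using res_neg[OF apos] d by (simp add: add.commute)
  show ?thesis
  proof (cases "c1 = h*m")
    case True
    then have s2: "2*c2 < a \<or> 2*(n-c2) < a" using c2 ne by auto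
    have "c1 mod a = h" using True hr by simp
    then have "c2 mod a = (a - h) mod a" using r2 by simp
    also have "\<dots> = h" using ah hpos by simp
    finally have "c2 mod a = h" .
    with strict_res[OF nam mpos apos c2(1) s2] have False using ah by auto
    then show ?thesis ..
  next
    case F1: False
    then have s1: "2*c1 < a \<or> 2*(n-c1) < a" using c1 by auto
    show ?thesis
    proof (cases "c2 = h*m")
      case True
      have "c2 mod a = h" using True hr by simp
      then have "c1 mod a = (a - h) mod a" using r1 by simp
      also have "\<dots> = h" using ah hpos by simp
      finally have "c1 mod a = h" .
      with strict_res[OF nam mpos apos c1(1) s1] have False using ah by auto
      then show ?thesis ..
    next
      case False
      then have s2: "2*c2 < a \<or> 2*(n-c2) < a" using c2 by auto
      show ?thesis
        by (rule C1_indep[OF nam apos mpos c1(1) _ c2(1) _ ne d]) (use s1 s2 in auto)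
    qed
  qed
qed

lemma C2_dom:
  fixes a m n h v :: nat
  assumes nam: "n = a*m" and apos: "0<a" and mpos: "0<m" and ah: "a = 2*h" and om: "odd m"
  and v: "v < n" "\<not> (2*v < a \<or> 2*(n-v) < a \<or> v = h*m)"
  shows "\<exists>c. c < n \<and> (2*c < a \<or> 2*(n-c) < a \<or> c = h*m) \<and> a dvd v + c \<and> \<not> n dvd v + c"
proof -
  have adn: "a dvd n" using nam by simp
  have np: "0 < n" using v by simp
  have hpos: "0 < h" using ah apos by simp
  define r where "r = v mod a"
  have rl: "r < a" unfolding r_def using apos by simp
  have rv: "r \<le> v" unfolding r_def by simp
  consider "r = 0" | "0 < r" "2*r < a" | "a < 2*r" | "r = h" using ah by linarith
  then show ?thesis
  proof cases
    case 1
    then have "a dvd v" unfolding r_def by (simp add: dvd_eq_mod_eq_0)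
    moreover have "\<not> n dvd v" using v apos by (auto dest: dvd_imp_le)
    ultimately show ?thesis using np apos by (intro exI[of _ 0]) simp
  next
    case 2
    have "v \<noteq> r" using 2 v by auto
    then have "a dvd v + (n - r) \<and> \<not> n dvd v + (n - r)"
      using dom_small_r[OF adn apos v(1)] 2 unfolding r_def by simp
    moreover have "n - r < n" "2*(n - (n - r)) < a" using 2 rv v by auto
    ultimately show ?thesis by blast
  next
    case 3
    have "v + (a - r) \<noteq> n" using 3 v rv rl by auto
    then have "a dvd v + (a - r) \<and> \<not> n dvd v + (a - r)"
      using dom_big_r[OF adn apos v(1) _ np] unfolding r_def by simp
    moreover have "a - r < n" "2*(a - r) < a" using 3 rv v rl by auto
    ultimately show ?thesis by blast
  next
    case 4
    obtain q where vq: "v = a*q + h" using mult_div_mod_eq[of a v] 4 unfolding r_def by metis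
    obtain k where mk: "m = 2*k + 1" using om oddE by blast
    have hm: "h*m = a*k + h" using mk ah by (simp add: algebra_simps)
    have "v + h*m = a*(q + k + 1)" using vq hm ah by (simp add: algebra_simps)
    then have d: "a dvd v + h*m" by simp
    have n2: "n = 2*(h*m)" using nam ah by simp
    have "\<not> n dvd v + h*m"
      by (rule not_ndvd) (use v n2 hpos mpos in auto)
    moreover have "h*m < n" using n2 hpos mpos by simp
    ultimately show ?thesis using d by blast
  qed
qed



lemma pc_generic:
  fixes a n :: nat and C :: "nat set"
  assumes sub: "C \<subseteq> {0..<n}"
  and I: "\<And>c1 c2. c1\<in>C \<Longrightarrow> c2\<in>C \<Longrightarrow> c1\<noteq>c2 \<Longrightarrow> a dvd c1+c2 \<Longrightarrow> n dvd c1+c2"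
  and D: "\<And>v. v<n \<Longrightarrow> v\<notin>C \<Longrightarrow> \<exists>c\<in>C. a dvd v+c \<and> \<not> n dvd v+c"
  and U: "\<And>v c1 c2. v<n \<Longrightarrow> v\<notin>C \<Longrightarrow> c1\<in>C \<Longrightarrow> c2\<in>C \<Longrightarrow> a dvd v+c1 \<Longrightarrow> a dvd v+c2 \<Longrightarrow> c1=c2"
  shows "perfect_code {0..<n} (\<lambda>x y. x\<noteq>y \<and> a dvd x+y \<and> \<not> n dvd x+y) C"
  unfolding perfect_code_def
proof (intro conjI ballI)
  show "C \<subseteq> {0..<n}" by fact
next
  fix x y assume "x \<in> C" "y \<in> C"
  then show "\<not> (x \<noteq> y \<and> a dvd x + y \<and> \<not> n dvd x + y)" using I by blast
next
  fix v assume v: "v \<in> {0..<n} - C"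
  then have vn: "v < n" and vC: "v \<notin> C" by auto
  obtain c where c: "c \<in> C" "a dvd v + c" "\<not> n dvd v + c" using D[OF vn vC] by blast
  have "c \<noteq> v" using c vC by auto
  show "\<exists>!c. c \<in> C \<and> v \<noteq> c \<and> a dvd v + c \<and> \<not> n dvd v + c"
  proof (rule ex1I[of _ c])
    show "c \<in> C \<and> v \<noteq> c \<and> a dvd v + c \<and> \<not> n dvd v + c" using c \<open>c \<noteq> v\<close> by auto
  next
    fix y assume "y \<in> C \<and> v \<noteq> y \<and> a dvd v + y \<and> \<not> n dvd v + y"
    then show "y = c" using U[OF vn vC _ c(1) _ c(2)] by blast
  qed
qed

lemma exist_pc:
  fixes a m n :: nat
  assumes nam: "n = a*m" and apos: "0<a" and mpos: "0<m" and cond: "\<not> (even a \<and> even m \<and> 4 \<le> m)"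
  shows "\<exists>C. perfect_code {0..<n} (\<lambda>x y. x\<noteq>y \<and> a dvd x+y \<and> \<not> n dvd x+y) C"
proof (cases "even a \<and> odd m")
  case True
  define h where "h = a div 2"
  have ah: "a = 2*h" using True unfolding h_def by simp
  define C where "C = {x. x < n \<and> (2*x < a \<or> 2*(n-x) < a \<or> x = h*m)}"
  have "perfect_code {0..<n} (\<lambda>x y. x\<noteq>y \<and> a dvd x+y \<and> \<not> n dvd x+y) C"
  proof (rule pc_generic)
    show "C \<subseteq> {0..<n}" unfolding C_def by auto
  next
    fix c1 c2 assume "c1 \<in> C" "c2 \<in> C" "c1 \<noteq> c2" "a dvd c1 + c2"
    then show "n dvd c1 + c2" using C2_indep[OF nam apos mpos ah] True unfolding C_def by blast
  next
    fix v assume "v < n" "v \<notin> C"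
    then show "\<exists>c\<in>C. a dvd v + c \<and> \<not> n dvd v + c"
      using C2_dom[OF nam apos mpos ah, of v] True unfolding C_def by auto
  next
    fix v c1 c2 assume "v < n" "v \<notin> C" "c1 \<in> C" "c2 \<in> C" "a dvd v + c1" "a dvd v + c2"
    then show "c1 = c2" using C2_uniq[OF nam apos mpos ah, of c1 c2] res_eq[OF apos] True
      unfolding C_def by blast
  qed
  then show ?thesis by blast
next
  case False
  have cond': "odd a \<or> m = 2" using False cond mpos by presburger
  define C where "C = {x. x < n \<and> (2*x \<le> a \<or> 2*(n-x) \<le> a)}"
  have "perfect_code {0..<n} (\<lambda>x y. x\<noteq>y \<and> a dvd x+y \<and> \<not> n dvd x+y) C"
  proof (rule pc_generic)
    show "C \<subseteq> {0..<n}" unfolding C_def by auto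
  next
    fix c1 c2 assume "c1 \<in> C" "c2 \<in> C" "c1 \<noteq> c2" "a dvd c1 + c2"
    then show "n dvd c1 + c2" using C1_indep[OF nam apos mpos] unfolding C_def by blast
  next
    fix v assume "v < n" "v \<notin> C"
    then show "\<exists>c\<in>C. a dvd v + c \<and> \<not> n dvd v + c"
      using C1_dom[OF nam apos mpos, of v] unfolding C_def by auto
  next
    fix v c1 c2 assume "v < n" "v \<notin> C" "c1 \<in> C" "c2 \<in> C" "a dvd v + c1" "a dvd v + c2"
    then show "c1 = c2" using C1_uniq[OF nam apos mpos cond', of v c1 c2]
      unfolding C_def by blast
  qed
  then show ?thesis by blast
qed

theorem theorem3p9:
  fixes n a :: nat and H :: "nat set"
  assumes "n \<ge> 1" and "Zn_subgroup n H"
  defines "a \<equiv> (LEAST k::nat. 0 < k \<and> k mod n \<in> H)"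
  shows "(\<exists>C. perfect_code {0..<n} (sg_sum_adj n H) C) \<longleftrightarrow>
           odd n
         \<or> (even n \<and> odd (n div a))
         \<or> (even n \<and> n div a = 2)
         \<or> (even n \<and> n div a \<ge> 4 \<and> even (n div a) \<and> odd a)"
proof -
  have S: "0 < a \<and> a dvd n \<and> H = {x. x < n \<and> a dvd x}"
    using struct_H[OF assms(1,2)] unfolding a_def .
  then have apos: "0 < a" and adn: "a dvd n" and HH: "H = {x. x < n \<and> a dvd x}" by auto
  define m where "m = n div a"
  have nam: "n = a*m" using adn unfolding m_def by simp
  have mpos: "0 < m" using nam assms(1) by (cases m) auto
  have adj: "sg_sum_adj n H = (\<lambda>x y. x\<noteq>y \<and> a dvd x+y \<and> \<not> n dvd x+y)"
    using adj_iff[OF adn HH] assms(1) by (intro ext) simp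
  have L: "(\<exists>C. perfect_code {0..<n} (sg_sum_adj n H) C) \<longleftrightarrow> \<not> (even a \<and> even m \<and> 4 \<le> m)"
  proof
    assume "\<exists>C. perfect_code {0..<n} (sg_sum_adj n H) C"
    then obtain C where "perfect_code {0..<n} (\<lambda>x y. x\<noteq>y \<and> a dvd x+y \<and> \<not> n dvd x+y) C"
      unfolding adj by blast
    then show "\<not> (even a \<and> even m \<and> 4 \<le> m)" using no_pc[OF nam apos] by blast
  next
    assume "\<not> (even a \<and> even m \<and> 4 \<le> m)"
    then show "\<exists>C. perfect_code {0..<n} (sg_sum_adj n H) C"
      unfolding adj using exist_pc[OF nam apos mpos] by blast
  qed
  have en: "even n \<longleftrightarrow> even a \<or> even m" using nam by simp
  show ?thesis unfolding L m_def[symmetric] en using mpos by presburger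
qed


end
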